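(* In the setting described in the context, the mapping $\psi^c$ is a monotone $(1-\min\{2\beta,1/2\})\gamma$-CRS with regards to $h$.
   Context: Let $I=\{1,\dots,n\}$ be a set of items, $B$ a positive integer, $[B]=\{1,\dots,B\}$, $[0;B]=\{0,1,\dots,B\}$; for $u,w\in[0;B]^I$, $u\le w$ means coordinatewise. Let $f:[0;B]^I\to\mathbb{R}_{\ge0}$ be monotone and lattice submodular. Each item $i$ has a random state $\Phi(i)\in[B]$, independent across items, with known distribution $p_i(s)=\Pr[\Phi(i)=s]$. Item $i$ in state $s$ has a nonnegative integer cost $c_i(s)$, with $c_i(s)\ge c_i(s')$ whenever $s\ge s'$. $C$ is a positive integer budget and $\mathcal{I}^{out}\subseteq 2^I$ is a downward-closed family. For $S\subseteq I$ and $\phi\in[B]^I$, $\phi_S$ equals $\phi(i)$ on $S$ and $0$ elsewhere; $\overline{f}(S)=\mathbb{E}[f(\Phi_S)]$, $F(\overline{x})=\sum_{U\subseteq I}\prod_{i\in U}\overline{x}(i)\prod_{i\notin U}(1-\overline{x}(i))\overline{f}(U)$, $P_{\mathcal{I}^{out}}=\mathrm{conv}\{\mathbf{1}_S: S\in\mathcal{I}^{out}\}$. A monotone $(\beta,\gamma)$-balanced CRS for $\mathcal{I}^{out}$ is a (possibly randomized) scheme that, for any $\overline{z}\in\beta\cdot P_{\mathcal{I}^{out}}$ and the random set $R$ containing each $i$ independently with probability $\overline{z}(i)$, maps $R$ to $\chi(R)\subseteq R$ with $\chi(R)\in\mathcal{I}^{out}$, such that $\Pr[i\in\chi(R)\mid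 i\in R]\ge\gamma$ for all $i$, and for $i\in R\subseteq R'$, $\Pr[i\in\chi(R)]\ge\Pr[i\in\chi(R')]$. Assume such a scheme $\chi^{io}$ exists for given $\beta,\gamma\in[0,1]$. Problem P1: variables $x(i,t)\ge0$ for $i\in I$, $t\in\{1,\dots,C-c_i(B)\}$, $\overline{x}(i)=\sum_t x(i,t)$; maximize $F(\overline{x})$ subject to $\overline{x}(i)\le1$, $\overline{x}\in P_{\mathcal{I}^{out}}$, and for all $t\in\{1,\dots,C\}$: $\sum_{i\in I}\mathbb{E}[\min\{c_i(\Phi(i)),t\}]\sum_{t'=1}^{t}x(i,t')\le 2t$. Let $y$ be the solution of P1 computed by the stochastic continuous greedy algorithm of Asadpour and Nazerzadeh (2016) with stopping time $l=\min\{\beta,1/4\}$ and step size $\delta=o(n^{-3})$, $\overline{y}(i)=\sum_t y(i,t)$. Distribution $h$: $v\in[0;B]^I$ has independent coordinates with $\Pr[v(i)=j]=p_i(j)\overline{y}(i)$ for $j\in[B]$ and $\Pr[v(i)=0]=1-\overline{y}(i)$; $R(v)=\{i:v(i)\ne0\}$. Mapping $\psi^a$: $\psi^a(v)(i)=v(i)$ if $i\in\chi^{io}(R(v))$ (applying $\chi^{io}$ with $\overline{z}=\overline{y}$), else $0$. Mapping $\psi^b$: for each $i\in R(v)$ independently sample $t(i)\in\{1,\dots,C-c_i(B)\}$ with $\Pr[t(i)=t]=y(i,t)/\overline{y}(i)$; $\psi^b(v)(i)=v(i)$ if $i\in R(v)$ and $\sum_{i'\in R(v)\setminus\{i\},\,t(i')\le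 t(i)}c_{i'}(v(i'))\le t(i)$, else $0$. Mapping $\psi^c$: apply $\psi^a$ and $\psi^b$ to $v$ independently and set $\psi^c(v)(i)=v(i)$ if $\psi^a(v)(i)=v(i)$ and $\psi^b(v)(i)=v(i)$, and $0$ otherwise. An $\alpha$-CRS with regards to $h$ is a (possibly randomized) mapping $\psi$ on $[0;B]^I$ with $\psi(v)(i)\in\{0,v(i)\}$ and $\Pr[\psi(v)(i)=j\mid v(i)=j]\ge\alpha$ for all $i\in I$, $j\in[B]$ (probability over $v\sim h$ and the randomness of $\psi$); it is monotone if for all $u,w$ with $u(i)=w(i)$ and $u\le w$, $\Pr[\psi(u)(i)=u(i)]\ge\Pr[\psi(w)(i)=w(i)]$ (over the randomness of $\psi$ only). *)

theory Defs
  imports "HOL-Probability.Probability"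
begin

(* Items are the elements of a finite type 'i (I = UNIV).  States are naturals;
   [B] = {1..B}, [0;B] = {0..B}. *)

definition downward_closed :: "'i set set \<Rightarrow> bool" where
  "downward_closed F \<longleftrightarrow> (\<forall>S T. S \<in> F \<and> T \<subseteq> S \<longrightarrow> T \<in> F)"

(* P_{I^out} = conv {1_S : S in I^out}, written as convex combinations of the
   finitely many indicator vectors *)
definition polytope :: "'i::finite set set \<Rightarrow> ('i \<Rightarrow> real) set" where
  "polytope F = {z. \<exists>lam :: 'i set \<Rightarrow> real.
      (\<forall>S\<in>F. lam S \<ge> 0) \<and> (\<Sum>S\<in>F. lam S) = 1 \<and>
      (\<forall>i. z i = (\<Sum>S\<in>F. lam S * indicator S i))}"

definition scaled_polytope :: "real \<Rightarrow> 'i::finite set set \<Rightarrow> ('i \<Rightarrow> real) set" where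
  "scaled_polytope b F = {z. \<exists>x\<in>polytope F. \<forall>i. z i = b * x i}"

definition rand_set :: "('i::finite \<Rightarrow> real) \<Rightarrow> 'i set pmf" where
  "rand_set z = map_pmf (\<lambda>b. {i. b i}) (Pi_pmf UNIV False (\<lambda>i. bernoulli_pmf (z i)))"

(* monotone (beta,gamma)-balanced CRS; chi z R is the (random) output on input R
   when the scheme is run for the vector z *)
definition balanced_CRS ::
  "'i::finite set set \<Rightarrow> real \<Rightarrow> real \<Rightarrow> (('i \<Rightarrow> real) \<Rightarrow> 'i set \<Rightarrow> 'i set pmf) \<Rightarrow> bool" where
  "balanced_CRS F b g chi \<longleftrightarrow>
     (\<forall>z \<in> scaled_polytope b F.
        (\<forall>R. \<forall>S \<in> set_pmf (chi z R). S \<subseteq> R \<and> S \<in> F) \<and>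
        (\<forall>i. measure_pmf.prob (bind_pmf (rand_set z) (\<lambda>R. map_pmf (\<lambda>S. (R, S)) (chi z R)))
                 {(R, S). i \<in> R \<and> i \<in> S}
             \<ge> g * measure_pmf.prob (rand_set z) {R. i \<in> R}) \<and>
        (\<forall>i R R'. i \<in> R \<and> R \<subseteq> R' \<longrightarrow>
             measure_pmf.prob (chi z R) {S. i \<in> S} \<ge> measure_pmf.prob (chi z R') {S. i \<in> S}))"

definition tdom :: "('i \<Rightarrow> nat \<Rightarrow> nat) \<Rightarrow> nat \<Rightarrow> nat \<Rightarrow> 'i \<Rightarrow> nat set" where
  "tdom c B C i = {1..C - c i B}"

definition xbar :: "('i \<Rightarrow> nat \<Rightarrow> nat) \<Rightarrow> nat \<Rightarrow> nat \<Rightarrow> ('i \<Rightarrow> nat \<Rightarrow> real) \<Rightarrow> 'i \<Rightarrow> real" where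
  "xbar c B C x i = (\<Sum>t\<in>tdom c B C i. x i t)"

definition P1_feasible ::
  "('i::finite \<Rightarrow> nat pmf) \<Rightarrow> ('i \<Rightarrow> nat \<Rightarrow> nat) \<Rightarrow> nat \<Rightarrow> nat \<Rightarrow> 'i set set
     \<Rightarrow> ('i \<Rightarrow> nat \<Rightarrow> real) \<Rightarrow> bool" where
  "P1_feasible p c B C F x \<longleftrightarrow>
     (\<forall>i. \<forall>t\<in>tdom c B C i. x i t \<ge> 0) \<and>
     (\<forall>i. xbar c B C x i \<le> 1) \<and>
     xbar c B C x \<in> polytope F \<and>
     (\<forall>t\<in>{1..C}. (\<Sum>i\<in>UNIV.
          measure_pmf.expectation (p i) (\<lambda>s. real (min (c i s) t)) *
          (\<Sum>t'\<in>{1..t} \<inter> tdom c B C i. x i t')) \<le> 2 * real t)"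

definition h_dist :: "('i::finite \<Rightarrow> nat pmf) \<Rightarrow> ('i \<Rightarrow> real) \<Rightarrow> ('i \<Rightarrow> nat) pmf" where
  "h_dist p yb = Pi_pmf UNIV 0
     (\<lambda>i. bind_pmf (bernoulli_pmf (yb i)) (\<lambda>b. if b then p i else return_pmf 0))"

definition Rv :: "('i \<Rightarrow> nat) \<Rightarrow> 'i set" where
  "Rv v = {i. v i \<noteq> 0}"

definition psi_a :: "(('i \<Rightarrow> real) \<Rightarrow> 'i set \<Rightarrow> 'i set pmf) \<Rightarrow> ('i \<Rightarrow> real)
     \<Rightarrow> ('i \<Rightarrow> nat) \<Rightarrow> ('i \<Rightarrow> nat) pmf" where
  "psi_a chi yb v = map_pmf (\<lambda>S i. if i \<in> S then v i else 0) (chi yb (Rv v))"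

definition t_dist :: "('i \<Rightarrow> nat \<Rightarrow> nat) \<Rightarrow> nat \<Rightarrow> nat \<Rightarrow> ('i \<Rightarrow> nat \<Rightarrow> real) \<Rightarrow> 'i \<Rightarrow> nat pmf" where
  "t_dist c B C y i = embed_pmf (\<lambda>t. if t \<in> tdom c B C i then y i t / xbar c B C y i else 0)"

definition psi_b :: "('i::finite \<Rightarrow> nat \<Rightarrow> nat) \<Rightarrow> nat \<Rightarrow> nat \<Rightarrow> ('i \<Rightarrow> nat \<Rightarrow> real)
     \<Rightarrow> ('i \<Rightarrow> nat) \<Rightarrow> ('i \<Rightarrow> nat) pmf" where
  "psi_b c B C y v = map_pmf
     (\<lambda>tt i. if i \<in> Rv v \<and>
                 (\<Sum>i'\<in>{i'\<in>Rv v - {i}. tt i' \<le> tt i}. c i' (v i')) \<le> tt i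
             then v i else 0)
     (Pi_pmf (Rv v) 0 (t_dist c B C y))"

definition psi_c :: "(('i::finite \<Rightarrow> real) \<Rightarrow> 'i set \<Rightarrow> 'i set pmf) \<Rightarrow> ('i \<Rightarrow> nat \<Rightarrow> nat)
     \<Rightarrow> nat \<Rightarrow> nat \<Rightarrow> ('i \<Rightarrow> nat \<Rightarrow> real) \<Rightarrow> ('i \<Rightarrow> nat) \<Rightarrow> ('i \<Rightarrow> nat) pmf" where
  "psi_c chi c B C y v = map_pmf
     (\<lambda>(a, b) i. if a i = v i \<and> b i = v i then v i else 0)
     (pair_pmf (psi_a chi (xbar c B C y) v) (psi_b c B C y v))"

definition states0 :: "nat \<Rightarrow> ('i \<Rightarrow> nat) set" where
  "states0 B = {v. \<forall>i. v i \<le> B}"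

definition is_CRS :: "nat \<Rightarrow> ('i \<Rightarrow> nat) pmf \<Rightarrow> (('i \<Rightarrow> nat) \<Rightarrow> ('i \<Rightarrow> nat) pmf) \<Rightarrow> real \<Rightarrow> bool" where
  "is_CRS B h psi alpha \<longleftrightarrow>
     (\<forall>v\<in>states0 B. \<forall>w\<in>set_pmf (psi v). \<forall>i. w i = 0 \<or> w i = v i) \<and>
     (\<forall>i. \<forall>j\<in>{1..B}.
        measure_pmf.prob (bind_pmf h (\<lambda>v. map_pmf (\<lambda>w. (v, w)) (psi v)))
           {(v, w). v i = j \<and> w i = j}
        \<ge> alpha * measure_pmf.prob h {v. v i = j})"

definition monotone_CRS :: "nat \<Rightarrow> (('i \<Rightarrow> nat) \<Rightarrow> ('i \<Rightarrow> nat) pmf) \<Rightarrow> bool" where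
  "monotone_CRS B psi \<longleftrightarrow>
     (\<forall>u\<in>states0 B. \<forall>w\<in>states0 B. \<forall>i. u i = w i \<and> u \<le> w \<longrightarrow>
        measure_pmf.prob (psi u) {x. x i = u i} \<ge> measure_pmf.prob (psi w) {x. x i = w i})"

end

theory Submission
  imports Defs
begin

lemma integrable_bounded_pmf:
  fixes f :: "'a \<Rightarrow> real"
  assumes "\<And>x. \<bar>f x\<bar> \<le> K"
  shows "integrable (measure_pmf M) f"
  by (rule measure_pmf.integrable_const_bound[where B=K]) (auto simp: assms)

lemma E_bind:
  fixes f :: "'b \<Rightarrow> real"
  assumes "\<And>x. \<bar>f x\<bar> \<le> K"
  shows "measure_pmf.expectation (bind_pmf M N) f =
         measure_pmf.expectation M (\<lambda>x. measure_pmf.expectation (N x) f)"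
  unfolding measure_pmf_bind
  by (rule integral_bind[where K="count_space UNIV" and B=K and B'=1])
     (auto simp: assms measure_pmf.emeasure_space_1 measure_pmf_in_subprob_algebra
       intro: measure_pmf.finite_measure)

lemma E_pair:
  fixes f :: "'a \<times> 'b \<Rightarrow> real"
  assumes "\<And>x. \<bar>f x\<bar> \<le> K"
  shows "measure_pmf.expectation (pair_pmf A B) f =
         measure_pmf.expectation A (\<lambda>a. measure_pmf.expectation B (\<lambda>b. f (a, b)))"
proof -
  have "measure_pmf.expectation (pair_pmf A B) f =
     measure_pmf.expectation A (\<lambda>a. measure_pmf.expectation (bind_pmf B (\<lambda>b. return_pmf (a, b))) f)"
    unfolding pair_pmf_def by (rule E_bind[OF assms])
  also have "\<dots> = measure_pmf.expectation A (\<lambda>a. measure_pmf.expectation B (\<lambda>b. f (a, b)))"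
    by (subst E_bind[OF assms]) simp
  finally show ?thesis .
qed

lemma E_swap:
  fixes f :: "'a \<Rightarrow> 'b \<Rightarrow> real"
  assumes "\<And>x y. \<bar>f x y\<bar> \<le> K"
  shows "measure_pmf.expectation A (\<lambda>a. measure_pmf.expectation B (\<lambda>b. f a b)) =
         measure_pmf.expectation B (\<lambda>b. measure_pmf.expectation A (\<lambda>a. f a b))"
proof -
  have "measure_pmf.expectation A (\<lambda>a. measure_pmf.expectation B (\<lambda>b. f a b)) =
        measure_pmf.expectation (pair_pmf A B) (\<lambda>(a,b). f a b)"
    by (subst E_pair[where K=K]) (auto simp: assms)
  also have "\<dots> = measure_pmf.expectation (map_pmf (\<lambda>(x, y). (y, x)) (pair_pmf B A)) (\<lambda>(a,b). f a b)"
    by (simp only: pair_commute_pmf[of A B])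
  also have "\<dots> = measure_pmf.expectation (pair_pmf B A) (\<lambda>(b,a). f a b)"
    by (simp add: case_prod_unfold)
  also have "\<dots> = measure_pmf.expectation B (\<lambda>b. measure_pmf.expectation A (\<lambda>a. f a b))"
    by (subst E_pair[where K=K]) (auto simp: assms)
  finally show ?thesis .
qed

lemma E_Pi_insert:
  fixes G :: "('a \<Rightarrow> 'b) \<Rightarrow> real"
  assumes "finite A" "a \<notin> A" "\<And>x. \<bar>G x\<bar> \<le> K"
  shows "measure_pmf.expectation (Pi_pmf (insert a A) d D) G =
     measure_pmf.expectation (D a) (\<lambda>y. measure_pmf.expectation (Pi_pmf A d D) (\<lambda>s. G (s(a:=y))))"
  by (simp add: Pi_pmf_insert[OF assms(1,2)] case_prod_unfold, subst E_pair[where K=K])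
     (auto simp: assms)

lemma E_Pi_component:
  fixes G :: "'b \<Rightarrow> real"
  assumes "finite A" "a \<in> A"
  shows "measure_pmf.expectation (Pi_pmf A d D) (\<lambda>s. G (s a)) = measure_pmf.expectation (D a) G"
proof -
  have "measure_pmf.expectation (Pi_pmf A d D) (\<lambda>s. G (s a)) =
        measure_pmf.expectation (map_pmf (\<lambda>s. s a) (Pi_pmf A d D)) G" by simp
  also have "\<dots> = measure_pmf.expectation (D a) G"
    by (simp add: Pi_pmf_component[OF assms(1)] assms(2))
  finally show ?thesis .
qed

lemma prob_as_E:
  "measure_pmf.prob M A = measure_pmf.expectation M (indicator A)"
  by simp

lemma chebyshev1:
  fixes F G :: "'b::linorder \<Rightarrow> real"
  assumes "\<And>x. \<bar>F x\<bar> \<le> 1" "\<And>x. \<bar>G x\<bar> \<le> 1"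
    and "\<And>x y. x \<le> y \<Longrightarrow> F y \<le> F x" "\<And>x y. x \<le> y \<Longrightarrow> G y \<le> G x"
  shows "measure_pmf.expectation M F * measure_pmf.expectation M G
         \<le> measure_pmf.expectation M (\<lambda>x. F x * G x)"
proof -
  let ?E = "measure_pmf.expectation M"
  have FG: "\<bar>F x * G y\<bar> \<le> 1" for x y
    using assms(1)[of x] assms(2)[of y] by (simp add: abs_mult mult_le_one)
  have int1: "integrable M F" "integrable M G" "integrable M (\<lambda>x. F x * G x)"
    using FG by (auto intro: integrable_bounded_pmf[where K=1] assms)
  have "0 \<le> measure_pmf.expectation (pair_pmf M M) (\<lambda>(x,y). (F x - F y) * (G x - G y))"
  proof (rule integral_nonneg_AE, rule AE_I2, clarsimp)
    fix x y :: 'b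
    show "0 \<le> (F x - F y) * (G x - G y)"
    proof (cases "x \<le> y")
      case True thus ?thesis using assms(3,4)[OF True] by (simp add: mult_nonneg_nonneg)
    next
      case False hence "y \<le> x" by simp
      thus ?thesis using assms(3,4)[OF \<open>y \<le> x\<close>] by (simp add: mult_nonpos_nonpos)
    qed
  qed
  also have "\<dots> = ?E (\<lambda>x. ?E (\<lambda>y. (F x - F y) * (G x - G y)))"
  proof (subst E_pair[where K=4])
    fix z :: "'b \<times> 'b"
    obtain x y where z: "z = (x,y)" by (cases z)
    have "\<bar>F x - F y\<bar> \<le> 2" "\<bar>G x - G y\<bar> \<le> 2"
      using assms(1)[of x] assms(1)[of y] assms(2)[of x] assms(2)[of y] by linarith+
    hence "\<bar>F x - F y\<bar> * \<bar>G x - G y\<bar> \<le> 2 * 2" by (intro mult_mono) auto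
    thus "\<bar>(case z of (x, y) \<Rightarrow> (F x - F y) * (G x - G y))\<bar> \<le> 4" by (simp add: z abs_mult)
  qed simp
  also have "\<dots> = ?E (\<lambda>x. F x * G x - F x * ?E G - G x * ?E F + ?E (\<lambda>y. F y * G y))"
  proof (rule Bochner_Integration.integral_cong[OF refl])
    fix x
    have "?E (\<lambda>y. (F x - F y) * (G x - G y)) =
          ?E (\<lambda>y. F x * G x - F x * G y - G x * F y + F y * G y)"
      by (simp add: algebra_simps)
    also have "\<dots> = F x * G x - F x * ?E G - G x * ?E F + ?E (\<lambda>y. F y * G y)"
      using int1 by (simp add: integral_add integral_diff)
    finally show "?E (\<lambda>y. (F x - F y) * (G x - G y)) = F x * G x - F x * ?E G - G x * ?E F + ?E (\<lambda>y. F y * G y)" .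
  qed
  also have "\<dots> = 2 * (?E (\<lambda>x. F x * G x) - ?E F * ?E G)"
    using int1 by (simp add: integral_add integral_diff algebra_simps)
  finally show ?thesis by simp
qed

lemma E_abs_le1:
  fixes f :: "'a \<Rightarrow> real"
  assumes "\<And>x. \<bar>f x\<bar> \<le> 1"
  shows "\<bar>measure_pmf.expectation M f\<bar> \<le> 1"
proof -
  have i: "integrable M f" by (rule integrable_bounded_pmf[where K=1]) (rule assms)
  have "measure_pmf.expectation M f \<le> measure_pmf.expectation M (\<lambda>_. 1)"
    by (rule integral_mono[OF i]) (auto intro: abs_le_D1[OF assms])
  moreover have "measure_pmf.expectation M (\<lambda>_. -1) \<le> measure_pmf.expectation M f"
    by (rule integral_mono[OF _ i]) (use assms in \<open>auto simp: abs_le_iff\<close>)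
  ultimately show ?thesis by simp
qed

lemma E_mono_bounded:
  fixes f g :: "'a \<Rightarrow> real"
  assumes "\<And>x. \<bar>f x\<bar> \<le> K" "\<And>x. \<bar>g x\<bar> \<le> K" "\<And>x. f x \<le> g x"
  shows "measure_pmf.expectation M f \<le> measure_pmf.expectation M g"
  by (rule integral_mono) (auto intro: integrable_bounded_pmf assms)

lemma harris:
  fixes D :: "'a \<Rightarrow> 'b::linorder pmf" and f g :: "('a \<Rightarrow> 'b) \<Rightarrow> real"
  assumes "finite A" "\<And>x. \<bar>f x\<bar> \<le> 1" "\<And>x. \<bar>g x\<bar> \<le> 1"
    and "\<And>x y. x \<le> y \<Longrightarrow> f y \<le> f x" "\<And>x y. x \<le> y \<Longrightarrow> g y \<le> g x"
  shows "measure_pmf.expectation (Pi_pmf A d D) f * measure_pmf.expectation (Pi_pmf A d D) g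
         \<le> measure_pmf.expectation (Pi_pmf A d D) (\<lambda>x. f x * g x)"
  using assms(1-5)
proof (induction A arbitrary: f g rule: finite_induct)
  case empty
  thus ?case by simp
next
  case (insert a A f g)
  let ?E = "measure_pmf.expectation (Pi_pmf A d D)"
  let ?Ea = "measure_pmf.expectation (D a)"
  define F where "F y = ?E (\<lambda>s. f (s(a:=y)))" for y
  define G where "G y = ?E (\<lambda>s. g (s(a:=y)))" for y
  define H where "H y = ?E (\<lambda>s. f (s(a:=y)) * g (s(a:=y)))" for y
  have fg: "\<bar>f x * g x\<bar> \<le> 1" for x
    using insert.prems(1)[of x] insert.prems(2)[of x] by (simp add: abs_mult mult_le_one)
  have upd: "s(a:=y) \<le> t(a:=y')" if "s \<le> t" "y \<le> y'" for s t :: "'a \<Rightarrow> 'b" and y y'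
    using that by (auto simp: le_fun_def)
  have e1: "measure_pmf.expectation (Pi_pmf (insert a A) d D) f = ?Ea F"
    unfolding F_def by (rule E_Pi_insert[where K=1]) (use insert in auto)
  have e2: "measure_pmf.expectation (Pi_pmf (insert a A) d D) g = ?Ea G"
    unfolding G_def by (rule E_Pi_insert[where K=1]) (use insert in auto)
  have e3: "measure_pmf.expectation (Pi_pmf (insert a A) d D) (\<lambda>x. f x * g x) = ?Ea H"
    unfolding H_def by (rule E_Pi_insert[where K=1]) (use insert fg in auto)
  have bF: "\<bar>F y\<bar> \<le> 1" for y unfolding F_def by (rule E_abs_le1) (rule insert.prems)
  have bG: "\<bar>G y\<bar> \<le> 1" for y unfolding G_def by (rule E_abs_le1) (rule insert.prems)
  have bH: "\<bar>H y\<bar> \<le> 1" for y unfolding H_def by (rule E_abs_le1) (rule fg)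
  have bFG: "\<bar>F y * G y\<bar> \<le> 1" for y
    using bF[of y] bG[of y] by (simp add: abs_mult mult_le_one)
  have mF: "F y' \<le> F y" if "y \<le> y'" for y y'
    unfolding F_def
    by (rule E_mono_bounded[where K=1]) (use insert.prems(1,3) upd[OF order.refl that] in auto)
  have mG: "G y' \<le> G y" if "y \<le> y'" for y y'
    unfolding G_def
    by (rule E_mono_bounded[where K=1]) (use insert.prems(2,4) upd[OF order.refl that] in auto)
  have FGH: "F y * G y \<le> H y" for y
    unfolding F_def G_def H_def
  proof (rule insert.IH)
    fix s t :: "'a \<Rightarrow> 'b" assume st: "s \<le> t"
    show "f (t(a:=y)) \<le> f (s(a:=y))" by (rule insert.prems(3)[OF upd[OF st order.refl]])
    show "g (t(a:=y)) \<le> g (s(a:=y))" by (rule insert.prems(4)[OF upd[OF st order.refl]])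
  qed (use insert.prems in auto)
  have "?Ea F * ?Ea G \<le> ?Ea (\<lambda>y. F y * G y)"
    by (rule chebyshev1) (use bF bG mF mG in auto)
  also have "\<dots> \<le> ?Ea H"
    by (rule E_mono_bounded[where K=1]) (use bFG bH FGH in auto)
  finally show ?case using e1 e2 e3 by simp
qed

definition cnd :: "('i \<Rightarrow> nat \<Rightarrow> nat) \<Rightarrow> ('i \<Rightarrow> nat) \<Rightarrow> 'i \<Rightarrow> ('i \<Rightarrow> nat) \<Rightarrow> bool" where
  "cnd c v i tt \<longleftrightarrow> (\<Sum>i'\<in>{i'\<in>Rv v - {i}. tt i' \<le> tt i}. c i' (v i')) \<le> tt i"

lemma sum_min_ge:
  fixes S :: "'a set" and g :: "'a \<Rightarrow> nat"
  assumes "finite S" "t < (\<Sum>k\<in>S. g k)"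
  shows "t \<le> (\<Sum>k\<in>S. min (g k) t)"
proof (cases "\<exists>k\<in>S. t \<le> g k")
  case True
  then obtain k where k: "k \<in> S" "t \<le> g k" by blast
  have "t = min (g k) t" using k by simp
  also have "\<dots> \<le> (\<Sum>k\<in>S. min (g k) t)"
    by (rule member_le_sum) (use assms k in auto)
  finally show ?thesis .
next
  case False
  hence "(\<Sum>k\<in>S. min (g k) t) = (\<Sum>k\<in>S. g k)"
    by (intro sum.cong) auto
  thus ?thesis using assms by simp
qed

lemma markov_pt:
  fixes v tt :: "'i::finite \<Rightarrow> nat"
  assumes "tt i \<ge> 1"
  shows "indicator {tt. \<not> cnd c v i tt} tt \<le>
    (\<Sum>k\<in>UNIV-{i}. (if v k \<noteq> 0 \<and> tt k \<le> tt i then real (min (c k (v k)) (tt i)) / real (tt i) else 0))"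
proof (cases "cnd c v i tt")
  case True
  have "0 \<le> (\<Sum>k\<in>UNIV-{i}. (if v k \<noteq> 0 \<and> tt k \<le> tt i then real (min (c k (v k)) (tt i)) / real (tt i) else 0))"
    by (rule sum_nonneg) simp
  thus ?thesis using True by simp
next
  case False
  let ?S = "{i'\<in>Rv v - {i}. tt i' \<le> tt i}"
  have lt: "tt i < (\<Sum>k\<in>?S. c k (v k))" using False by (simp add: cnd_def)
  have "tt i \<le> (\<Sum>k\<in>?S. min (c k (v k)) (tt i))"
    by (rule sum_min_ge[OF _ lt]) simp
  hence "real (tt i) \<le> (\<Sum>k\<in>?S. real (min (c k (v k)) (tt i)))"
    by (metis of_nat_le_iff of_nat_sum)
  hence "1 \<le> (\<Sum>k\<in>?S. real (min (c k (v k)) (tt i))) / real (tt i)"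
    using assms by simp
  also have "\<dots> = (\<Sum>k\<in>?S. real (min (c k (v k)) (tt i)) / real (tt i))"
    by (simp add: sum_divide_distrib)
  also have "\<dots> = (\<Sum>k\<in>UNIV-{i}. (if v k \<noteq> 0 \<and> tt k \<le> tt i then real (min (c k (v k)) (tt i)) / real (tt i) else 0))"
    by (subst sum.inter_filter[symmetric]) (auto simp: Rv_def intro!: sum.cong)
  finally show ?thesis using False by simp
qed

lemma tdist_pmf:
  assumes "xbar c B C y k > 0" "\<forall>t\<in>tdom c B C k. y k t \<ge> 0"
  shows "pmf (t_dist c B C y k) t = (if t \<in> tdom c B C k then y k t / xbar c B C y k else 0)"
    and "set_pmf (t_dist c B C y k) \<subseteq> tdom c B C k"
proof -
  let ?f = "\<lambda>t. if t \<in> tdom c B C k then y k t / xbar c B C y k else 0"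
  have nn: "\<And>t. 0 \<le> ?f t" using assms by (auto intro!: divide_nonneg_pos)
  have "(\<integral>\<^sup>+t. ennreal (?f t) \<partial>count_space UNIV) = (\<Sum>t\<in>tdom c B C k. ennreal (?f t))"
    by (rule nn_integral_count_space') (auto simp: tdom_def)
  also have "\<dots> = ennreal (\<Sum>t\<in>tdom c B C k. ?f t)"
    by (rule sum_ennreal) (use assms in \<open>auto intro!: divide_nonneg_pos\<close>)
  also have "(\<Sum>t\<in>tdom c B C k. ?f t) = (\<Sum>t\<in>tdom c B C k. y k t) / xbar c B C y k"
    by (simp add: sum_divide_distrib)
  also have "\<dots> = 1" using assms(1) by (simp add: xbar_def)
  finally have pr: "(\<integral>\<^sup>+t. ennreal (?f t) \<partial>count_space UNIV) = 1" by simp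
  show "pmf (t_dist c B C y k) t = ?f t"
    unfolding t_dist_def by (rule pmf_embed_pmf[OF nn pr])
  show "set_pmf (t_dist c B C y k) \<subseteq> tdom c B C k"
    unfolding t_dist_def by (subst set_embed_pmf[OF nn pr]) (auto split: if_splits)
qed


lemma E_01:
  fixes f :: "'a \<Rightarrow> real"
  assumes "\<And>x. 0 \<le> f x" "\<And>x. f x \<le> 1"
  shows "0 \<le> measure_pmf.expectation M f" "measure_pmf.expectation M f \<le> 1"
proof -
  have "\<bar>f x\<bar> \<le> 1" for x using assms[of x] by simp
  hence "\<bar>measure_pmf.expectation M f\<bar> \<le> 1" by (rule E_abs_le1)
  thus "measure_pmf.expectation M f \<le> 1" by simp
  show "0 \<le> measure_pmf.expectation M f" by (rule integral_nonneg_AE) (simp add: assms)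
qed

lemma min_div_le1: "real (min a (t::nat)) / real t \<le> 1"
  by (cases "t = 0") (auto simp: divide_le_eq_1)

lemma markov_step3:
  fixes p :: "'i::finite \<Rightarrow> nat pmf" and k i :: 'i
  assumes psupp: "\<forall>k. set_pmf (p k) \<subseteq> {1..B}"
    and ynn: "\<forall>k. \<forall>t\<in>tdom c B C k. y k t \<ge> 0"
    and ybnd: "\<forall>k. xbar c B C y k \<le> 1"
    and Ddef: "D = (\<lambda>k. bind_pmf (bernoulli_pmf (xbar c B C y k)) (\<lambda>b. if b then p k else return_pmf 0))"
    and ki: "k \<noteq> i"
  shows "measure_pmf.expectation (Pi_pmf (UNIV-{i}) 0 D) (\<lambda>\<sigma>.
           measure_pmf.expectation (Pi_pmf UNIV 0 (t_dist c B C y)) (\<lambda>tt.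
             (if \<sigma> k \<noteq> 0 \<and> tt k \<le> tt i then real (min (c k (\<sigma> k)) (tt i)) / real (tt i) else 0)))
   \<le> measure_pmf.expectation (t_dist c B C y i) (\<lambda>t.
        (\<Sum>t'\<in>{1..t} \<inter> tdom c B C k. y k t') *
        measure_pmf.expectation (p k) (\<lambda>s. real (min (c k s) t)) / real t)"
proof -
  let ?T = "t_dist c B C y"
  let ?yb = "xbar c B C y"
  define \<psi> where "\<psi> s t = (if s \<noteq> 0 then real (min (c k s) t) / real t * measure_pmf.prob (?T k) {..t} else 0)" for s t
  have ybnn: "0 \<le> ?yb k" unfolding xbar_def using ynn by (auto intro: sum_nonneg)
  have psi01: "0 \<le> \<psi> s t" "\<psi> s t \<le> 1" for s t
  proof -
    show "0 \<le> \<psi> s t" by (simp add: \<psi>_def)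
    have "real (min (c k s) t) / real t * measure_pmf.prob (?T k) {..t} \<le> 1 * 1"
      by (rule mult_mono) (auto simp: min_div_le1 simp del: of_nat_min)
    thus "\<psi> s t \<le> 1" by (simp add: \<psi>_def)
  qed
  have UNIV_ins: "(UNIV :: 'i set) = insert i (UNIV - {i})" by auto
  have s3a: "measure_pmf.expectation (Pi_pmf UNIV 0 ?T) (\<lambda>tt.
             (if \<sigma> k \<noteq> 0 \<and> tt k \<le> tt i then real (min (c k (\<sigma> k)) (tt i)) / real (tt i) else 0))
           = measure_pmf.expectation (?T i) (\<psi> (\<sigma> k))" for \<sigma> :: "'i \<Rightarrow> nat"
  proof -
    have "measure_pmf.expectation (Pi_pmf UNIV 0 ?T) (\<lambda>tt.
             (if \<sigma> k \<noteq> 0 \<and> tt k \<le> tt i then real (min (c k (\<sigma> k)) (tt i)) / real (tt i) else 0))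
        = measure_pmf.expectation (?T i) (\<lambda>t. measure_pmf.expectation (Pi_pmf (UNIV-{i}) 0 ?T) (\<lambda>tt'.
             (if \<sigma> k \<noteq> 0 \<and> tt' k \<le> t then real (min (c k (\<sigma> k)) t) / real t else 0)))"
      apply (subst UNIV_ins, subst E_Pi_insert[where K=1])
        apply (auto simp: min_div_le1 simp del: of_nat_min)[3]
      apply (rule Bochner_Integration.integral_cong[OF refl])+
      apply (simp add: ki)
      done
    also have "\<dots> = measure_pmf.expectation (?T i) (\<lambda>t. measure_pmf.expectation (?T k) (\<lambda>t'.
             (if \<sigma> k \<noteq> 0 \<and> t' \<le> t then real (min (c k (\<sigma> k)) t) / real t else 0)))"
      by (subst E_Pi_component) (auto simp: ki)
    also have "\<dots> = measure_pmf.expectation (?T i) (\<psi> (\<sigma> k))"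
    proof (rule Bochner_Integration.integral_cong[OF refl])
      fix t
      have "(\<lambda>t'. (if \<sigma> k \<noteq> 0 \<and> t' \<le> t then real (min (c k (\<sigma> k)) t) / real t else 0)) =
            (\<lambda>t'. (if \<sigma> k \<noteq> 0 then real (min (c k (\<sigma> k)) t) / real t else 0) * indicator {..t} t')"
        by (auto simp: indicator_def)
      thus "measure_pmf.expectation (?T k) (\<lambda>t'.
             (if \<sigma> k \<noteq> 0 \<and> t' \<le> t then real (min (c k (\<sigma> k)) t) / real t else 0)) = \<psi> (\<sigma> k) t"
        by (simp add: \<psi>_def)
    qed
    finally show ?thesis .
  qed
  have "measure_pmf.expectation (Pi_pmf (UNIV-{i}) 0 D) (\<lambda>\<sigma>.
           measure_pmf.expectation (Pi_pmf UNIV 0 ?T) (\<lambda>tt.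
             (if \<sigma> k \<noteq> 0 \<and> tt k \<le> tt i then real (min (c k (\<sigma> k)) (tt i)) / real (tt i) else 0)))
     = measure_pmf.expectation (Pi_pmf (UNIV-{i}) 0 D) (\<lambda>\<sigma>. measure_pmf.expectation (?T i) (\<psi> (\<sigma> k)))"
    by (simp only: s3a)
  also have "\<dots> = measure_pmf.expectation (D k) (\<lambda>s. measure_pmf.expectation (?T i) (\<psi> s))"
    by (rule E_Pi_component) (auto simp: ki)
  also have "\<dots> = measure_pmf.expectation (?T i) (\<lambda>t. measure_pmf.expectation (D k) (\<lambda>s. \<psi> s t))"
    by (rule E_swap[where K=1]) (use psi01 in \<open>auto simp: abs_le_iff intro: order_trans[OF _ psi01(1)]\<close>)
  also have "\<dots> \<le> measure_pmf.expectation (?T i) (\<lambda>t.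
        (\<Sum>t'\<in>{1..t} \<inter> tdom c B C k. y k t') *
        measure_pmf.expectation (p k) (\<lambda>s. real (min (c k s) t)) / real t)"
  proof (rule E_mono_bounded[where K=1])
    fix t
    show "\<bar>measure_pmf.expectation (D k) (\<lambda>s. \<psi> s t)\<bar> \<le> 1"
      by (rule E_abs_le1) (use psi01 in \<open>auto simp: abs_le_iff intro: order_trans[OF _ psi01(1)]\<close>)
    have sy: "0 \<le> (\<Sum>t'\<in>{1..t} \<inter> tdom c B C k. y k t')" "(\<Sum>t'\<in>{1..t} \<inter> tdom c B C k. y k t') \<le> 1"
    proof -
      show "0 \<le> (\<Sum>t'\<in>{1..t} \<inter> tdom c B C k. y k t')" using ynn by (auto intro: sum_nonneg)
      have "(\<Sum>t'\<in>{1..t} \<inter> tdom c B C k. y k t') \<le> (\<Sum>t'\<in>tdom c B C k. y k t')"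
        by (rule sum_mono2) (use ynn in \<open>auto simp: tdom_def\<close>)
      also have "\<dots> \<le> 1" using ybnd by (simp add: xbar_def)
      finally show "(\<Sum>t'\<in>{1..t} \<inter> tdom c B C k. y k t') \<le> 1" .
    qed
    have em: "0 \<le> measure_pmf.expectation (p k) (\<lambda>s. real (min (c k s) t)) / real t"
             "measure_pmf.expectation (p k) (\<lambda>s. real (min (c k s) t)) / real t \<le> 1"
    proof -
      have "measure_pmf.expectation (p k) (\<lambda>s. real (min (c k s) t)) / real t =
            measure_pmf.expectation (p k) (\<lambda>s. real (min (c k s) t) / real t)" by simp
      moreover have "0 \<le> measure_pmf.expectation (p k) (\<lambda>s. real (min (c k s) t) / real t)"
                    "measure_pmf.expectation (p k) (\<lambda>s. real (min (c k s) t) / real t) \<le> 1"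
        by (rule E_01; simp add: min_div_le1 del: of_nat_min)+
      ultimately show "0 \<le> measure_pmf.expectation (p k) (\<lambda>s. real (min (c k s) t)) / real t"
             "measure_pmf.expectation (p k) (\<lambda>s. real (min (c k s) t)) / real t \<le> 1" by simp_all
    qed
    have "0 \<le> (\<Sum>t'\<in>{1..t} \<inter> tdom c B C k. y k t') *
        (measure_pmf.expectation (p k) (\<lambda>s. real (min (c k s) t)) / real t)"
      using sy em by simp
    moreover have "(\<Sum>t'\<in>{1..t} \<inter> tdom c B C k. y k t') *
        (measure_pmf.expectation (p k) (\<lambda>s. real (min (c k s) t)) / real t) \<le> 1 * 1"
      by (rule mult_mono) (use sy em in auto)
    ultimately show "\<bar>(\<Sum>t'\<in>{1..t} \<inter> tdom c B C k. y k t') *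
        measure_pmf.expectation (p k) (\<lambda>s. real (min (c k s) t)) / real t\<bar> \<le> 1" by simp
    have Dk: "measure_pmf.expectation (D k) (\<lambda>s. \<psi> s t) = ?yb k * measure_pmf.expectation (p k) (\<lambda>s. \<psi> s t)"
    proof -
      have "measure_pmf.expectation (D k) (\<lambda>s. \<psi> s t) =
         measure_pmf.expectation (bernoulli_pmf (?yb k)) (\<lambda>b. measure_pmf.expectation (if b then p k else return_pmf 0) (\<lambda>s. \<psi> s t))"
        unfolding Ddef by (rule E_bind[where K=1]) (use psi01 in \<open>auto simp: abs_le_iff intro: order_trans[OF _ psi01(1)]\<close>)
      also have "\<dots> = ?yb k * measure_pmf.expectation (p k) (\<lambda>s. \<psi> s t)"
        using ybnn ybnd by (simp add: \<psi>_def)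
      finally show ?thesis .
    qed
    have pk: "measure_pmf.expectation (p k) (\<lambda>s. \<psi> s t) =
       measure_pmf.expectation (p k) (\<lambda>s. real (min (c k s) t)) / real t * measure_pmf.prob (?T k) {..t}"
    proof -
      have "measure_pmf.expectation (p k) (\<lambda>s. \<psi> s t) =
            measure_pmf.expectation (p k) (\<lambda>s. real (min (c k s) t) / real t * measure_pmf.prob (?T k) {..t})"
      proof (rule integral_cong_AE)
        show "AE s in measure_pmf (p k). \<psi> s t = real (min (c k s) t) / real t * measure_pmf.prob (?T k) {..t}"
        proof (unfold AE_measure_pmf_iff, intro ballI)
          fix s assume "s \<in> set_pmf (p k)"
          hence "s \<noteq> 0" using psupp by fastforce
          thus "\<psi> s t = real (min (c k s) t) / real t * measure_pmf.prob (?T k) {..t}"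
            unfolding \<psi>_def by (simp only: if_True not_False_eq_True)
        qed
      qed simp_all
      thus ?thesis by simp
    qed
    have yP: "?yb k * measure_pmf.prob (?T k) {..t} \<le> (\<Sum>t'\<in>{1..t} \<inter> tdom c B C k. y k t')"
    proof (cases "?yb k = 0")
      case True thus ?thesis using sy by simp
    next
      case False
      hence ypos: "?yb k > 0" using ybnn by simp
      have "measure_pmf.prob (?T k) {..t} = (\<Sum>t'\<in>{..t}. pmf (?T k) t')"
        by (simp add: measure_measure_pmf_finite)
      also have "\<dots> = (\<Sum>t'\<in>{..t}. if t' \<in> tdom c B C k then y k t' / ?yb k else 0)"
        by (rule sum.cong[OF refl]) (rule tdist_pmf(1)[OF ypos], use ynn in auto)
      also have "\<dots> = (\<Sum>t'\<in>{..t} \<inter> tdom c B C k. y k t' / ?yb k)"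
        by (simp add: sum.inter_restrict)
      also have "{..t} \<inter> tdom c B C k = {1..t} \<inter> tdom c B C k" by (auto simp: tdom_def)
      finally have "measure_pmf.prob (?T k) {..t} = (\<Sum>t'\<in>{1..t} \<inter> tdom c B C k. y k t') / ?yb k"
        by (simp add: sum_divide_distrib)
      thus ?thesis using ypos by simp
    qed
    have "measure_pmf.expectation (D k) (\<lambda>s. \<psi> s t) =
       (?yb k * measure_pmf.prob (?T k) {..t}) * (measure_pmf.expectation (p k) (\<lambda>s. real (min (c k s) t)) / real t)"
      by (simp add: Dk pk)
    also have "\<dots> \<le> (\<Sum>t'\<in>{1..t} \<inter> tdom c B C k. y k t') * (measure_pmf.expectation (p k) (\<lambda>s. real (min (c k s) t)) / real t)"
      by (rule mult_right_mono[OF yP em(1)])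
    finally show "measure_pmf.expectation (D k) (\<lambda>s. \<psi> s t) \<le> (\<Sum>t'\<in>{1..t} \<inter> tdom c B C k. y k t') *
        measure_pmf.expectation (p k) (\<lambda>s. real (min (c k s) t)) / real t" by simp
  qed
  finally show ?thesis .
qed


lemma markov_main:
  fixes p :: "'i::finite \<Rightarrow> nat pmf" and i :: 'i and l :: real
  assumes psupp: "\<forall>k. set_pmf (p k) \<subseteq> {1..B}"
    and ynn: "\<forall>k. \<forall>t\<in>tdom c B C k. y k t \<ge> 0"
    and ybnd: "\<forall>k. xbar c B C y k \<le> 1"
    and Ddef: "D = (\<lambda>k. bind_pmf (bernoulli_pmf (xbar c B C y k)) (\<lambda>b. if b then p k else return_pmf 0))"
    and ypos: "xbar c B C y i > 0"
    and cons: "\<forall>t\<in>{1..C}. (\<Sum>k\<in>UNIV. measure_pmf.expectation (p k) (\<lambda>s. real (min (c k s) t)) *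
          (\<Sum>t'\<in>{1..t} \<inter> tdom c B C k. x k t')) \<le> 2 * real t"
    and yx: "\<forall>k t. y k t = l * x k t" and l: "0 \<le> l"
  shows "1 - 2 * l \<le> measure_pmf.expectation (Pi_pmf (UNIV-{i}) 0 D)
           (\<lambda>\<sigma>. measure_pmf.prob (Pi_pmf UNIV 0 (t_dist c B C y)) {tt. cnd c (\<sigma>(i:=j)) i tt})"
proof -
  let ?T = "t_dist c B C y"
  let ?P = "Pi_pmf UNIV 0 ?T"
  let ?h = "Pi_pmf (UNIV-{i}) 0 D"
  define a where "a k \<sigma> tt = (if \<sigma> k \<noteq> 0 \<and> tt k \<le> tt i then real (min (c k (\<sigma> k)) (tt i)) / real (tt i) else 0)"
    for k and \<sigma> tt :: "'i \<Rightarrow> nat"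
  define b where "b k t = (\<Sum>t'\<in>{1..t} \<inter> tdom c B C k. y k t') *
        measure_pmf.expectation (p k) (\<lambda>s. real (min (c k s) t)) / real t" for k t
  define Q where "Q \<sigma> = measure_pmf.prob ?P {tt. cnd c (\<sigma>(i:=j)) i tt}" for \<sigma>
  have a01: "0 \<le> a k \<sigma> tt" "a k \<sigma> tt \<le> 1" for k \<sigma> tt
    by (auto simp: a_def min_div_le1 simp del: of_nat_min)
  have aabs: "\<bar>a k \<sigma> tt\<bar> \<le> 1" for k \<sigma> tt using a01[of k \<sigma> tt] by simp
  have Ea01: "0 \<le> measure_pmf.expectation ?P (a k \<sigma>)" "measure_pmf.expectation ?P (a k \<sigma>) \<le> 1" for k \<sigma>
    by (rule E_01; rule a01)+
  have Tsupp: "set_pmf (?T i) \<subseteq> tdom c B C i" by (rule tdist_pmf(2)[OF ypos]) (use ynn in auto)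
  have AEi: "AE tt in measure_pmf ?P. 1 \<le> tt i"
  proof (unfold AE_measure_pmf_iff, intro ballI)
    fix tt assume "tt \<in> set_pmf ?P"
    hence "tt i \<in> set_pmf (?T i)" by (auto simp: set_Pi_pmf PiE_dflt_def)
    thus "1 \<le> tt i" using Tsupp by (auto simp: tdom_def)
  qed
  have S1: "1 - Q \<sigma> \<le> (\<Sum>k\<in>UNIV-{i}. measure_pmf.expectation ?P (a k \<sigma>))" for \<sigma>
  proof -
    have "1 - Q \<sigma> = measure_pmf.prob ?P {tt. \<not> cnd c (\<sigma>(i:=j)) i tt}"
      using measure_pmf.prob_compl[of "{tt. cnd c (\<sigma>(i:=j)) i tt}" ?P]
      by (simp add: Q_def Compl_eq_Diff_UNIV[symmetric] Collect_neg_eq)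
    also have "\<dots> = measure_pmf.expectation ?P (indicator {tt. \<not> cnd c (\<sigma>(i:=j)) i tt})"
      by simp
    also have "\<dots> \<le> measure_pmf.expectation ?P (\<lambda>tt. \<Sum>k\<in>UNIV-{i}. a k \<sigma> tt)"
    proof (rule integral_mono_AE)
      show "integrable (measure_pmf ?P) (indicator {tt. \<not> cnd c (\<sigma>(i:=j)) i tt} :: _ \<Rightarrow> real)"
        by (rule integrable_bounded_pmf[where K=1]) (simp add: indicator_def)
      show "integrable (measure_pmf ?P) (\<lambda>tt. \<Sum>k\<in>UNIV-{i}. a k \<sigma> tt)"
        by (rule Bochner_Integration.integrable_sum[where f="\<lambda>k tt. a k \<sigma> tt"], rule integrable_bounded_pmf[where K=1], rule aabs)
      show "AE tt in measure_pmf ?P. indicator {tt. \<not> cnd c (\<sigma>(i:=j)) i tt} tt \<le> (\<Sum>k\<in>UNIV-{i}. a k \<sigma> tt)"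
        using AEi
      proof eventually_elim
        case (elim tt)
        have "indicator {tt. \<not> cnd c (\<sigma>(i:=j)) i tt} tt \<le>
          (\<Sum>k\<in>UNIV-{i}. (if (\<sigma>(i:=j)) k \<noteq> 0 \<and> tt k \<le> tt i then real (min (c k ((\<sigma>(i:=j)) k)) (tt i)) / real (tt i) else 0))"
          by (rule markov_pt[where i=i and tt=tt, OF elim])
        also have "\<dots> = (\<Sum>k\<in>UNIV-{i}. a k \<sigma> tt)"
          by (rule sum.cong) (auto simp: a_def)
        finally show ?case .
      qed
    qed
    also have "\<dots> = (\<Sum>k\<in>UNIV-{i}. measure_pmf.expectation ?P (a k \<sigma>))"
      by (rule Bochner_Integration.integral_sum[where f="\<lambda>k tt. a k \<sigma> tt"], rule integrable_bounded_pmf[where K=1], rule aabs)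
    finally show ?thesis .
  qed
  have Q01: "0 \<le> Q \<sigma>" "Q \<sigma> \<le> 1" for \<sigma> by (simp_all add: Q_def)
  have b01: "0 \<le> b k t" "b k t \<le> 1" for k t
  proof -
    have sy: "0 \<le> (\<Sum>t'\<in>{1..t} \<inter> tdom c B C k. y k t')" "(\<Sum>t'\<in>{1..t} \<inter> tdom c B C k. y k t') \<le> 1"
    proof -
      show "0 \<le> (\<Sum>t'\<in>{1..t} \<inter> tdom c B C k. y k t')" using ynn by (auto intro: sum_nonneg)
      have "(\<Sum>t'\<in>{1..t} \<inter> tdom c B C k. y k t') \<le> (\<Sum>t'\<in>tdom c B C k. y k t')"
        by (rule sum_mono2) (use ynn in \<open>auto simp: tdom_def\<close>)
      also have "\<dots> \<le> 1" using ybnd by (simp add: xbar_def)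
      finally show "(\<Sum>t'\<in>{1..t} \<inter> tdom c B C k. y k t') \<le> 1" .
    qed
    have "measure_pmf.expectation (p k) (\<lambda>s. real (min (c k s) t)) / real t =
          measure_pmf.expectation (p k) (\<lambda>s. real (min (c k s) t) / real t)" by simp
    moreover have "0 \<le> measure_pmf.expectation (p k) (\<lambda>s. real (min (c k s) t) / real t)"
                  "measure_pmf.expectation (p k) (\<lambda>s. real (min (c k s) t) / real t) \<le> 1"
      by (rule E_01; simp add: min_div_le1 del: of_nat_min)+
    ultimately have em: "0 \<le> measure_pmf.expectation (p k) (\<lambda>s. real (min (c k s) t)) / real t"
           "measure_pmf.expectation (p k) (\<lambda>s. real (min (c k s) t)) / real t \<le> 1" by simp_all
    have "0 \<le> (\<Sum>t'\<in>{1..t} \<inter> tdom c B C k. y k t') *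
        (measure_pmf.expectation (p k) (\<lambda>s. real (min (c k s) t)) / real t)"
      using sy em by simp
    thus "0 \<le> b k t" by (simp add: b_def)
    have "(\<Sum>t'\<in>{1..t} \<inter> tdom c B C k. y k t') *
        (measure_pmf.expectation (p k) (\<lambda>s. real (min (c k s) t)) / real t) \<le> 1 * 1"
      by (rule mult_mono) (use sy em in auto)
    thus "b k t \<le> 1" by (simp add: b_def)
  qed
  have babs: "\<bar>b k t\<bar> \<le> 1" for k t using b01[of k t] by simp
  have "1 - measure_pmf.expectation ?h Q = measure_pmf.expectation ?h (\<lambda>\<sigma>. 1 - Q \<sigma>)"
  proof -
    have intQ: "integrable (measure_pmf ?h) Q"
    proof (rule integrable_bounded_pmf[where K=1])
      fix \<sigma> show "\<bar>Q \<sigma>\<bar> \<le> 1" using Q01[of \<sigma>] by simp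
    qed
    show ?thesis
      using Bochner_Integration.integral_diff[OF measure_pmf.integrable_const intQ, of 1] by simp
  qed
  also have "\<dots> \<le> measure_pmf.expectation ?h (\<lambda>\<sigma>. \<Sum>k\<in>UNIV-{i}. measure_pmf.expectation ?P (a k \<sigma>))"
  proof (rule E_mono_bounded[where K="real (card (UNIV :: 'i set))"])
    fix \<sigma>
    show "1 - Q \<sigma> \<le> (\<Sum>k\<in>UNIV-{i}. measure_pmf.expectation ?P (a k \<sigma>))" by (rule S1)
    have "\<bar>1 - Q \<sigma>\<bar> \<le> 1" using Q01[of \<sigma>] by simp
    also have "1 \<le> real (card (UNIV :: 'i set))" by (simp add: Suc_le_eq)
    finally show "\<bar>1 - Q \<sigma>\<bar> \<le> real (card (UNIV :: 'i set))" .
    have "(\<Sum>k\<in>UNIV-{i}. measure_pmf.expectation ?P (a k \<sigma>)) \<le> (\<Sum>k\<in>UNIV-{i}. 1)"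
      by (rule sum_mono) (rule Ea01)
    also have "\<dots> \<le> real (card (UNIV :: 'i set))" by (simp add: card_Diff_subset)
    finally show "\<bar>\<Sum>k\<in>UNIV-{i}. measure_pmf.expectation ?P (a k \<sigma>)\<bar> \<le> real (card (UNIV :: 'i set))"
      using sum_nonneg[of "UNIV-{i}" "\<lambda>k. measure_pmf.expectation ?P (a k \<sigma>)"] Ea01 by simp
  qed
  also have "\<dots> = (\<Sum>k\<in>UNIV-{i}. measure_pmf.expectation ?h (\<lambda>\<sigma>. measure_pmf.expectation ?P (a k \<sigma>)))"
    by (rule Bochner_Integration.integral_sum[where f="\<lambda>k \<sigma>. measure_pmf.expectation ?P (a k \<sigma>)"], rule integrable_bounded_pmf[where K=1])
       (use Ea01 in \<open>auto simp: abs_le_iff intro: order_trans[OF _ Ea01(1)]\<close>)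
  also have "\<dots> \<le> (\<Sum>k\<in>UNIV-{i}. measure_pmf.expectation (?T i) (b k))"
  proof (rule sum_mono)
    fix k assume "k \<in> UNIV - {i}"
    hence ki: "k \<noteq> i" by simp
    show "measure_pmf.expectation ?h (\<lambda>\<sigma>. measure_pmf.expectation ?P (a k \<sigma>)) \<le>
          measure_pmf.expectation (?T i) (b k)"
      unfolding a_def b_def by (rule markov_step3[OF psupp ynn ybnd Ddef ki])
  qed
  also have "\<dots> \<le> (\<Sum>k\<in>UNIV. measure_pmf.expectation (?T i) (b k))"
    by (rule sum_mono2) (auto intro: E_01 b01)
  also have "\<dots> = measure_pmf.expectation (?T i) (\<lambda>t. \<Sum>k\<in>UNIV. b k t)"
    by (rule Bochner_Integration.integral_sum[where f="\<lambda>k t. b k t", symmetric], rule integrable_bounded_pmf[where K=1], rule babs)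
  also have "\<dots> \<le> measure_pmf.expectation (?T i) (\<lambda>t. 2 * l)"
  proof (rule integral_mono_AE)
    show "integrable (measure_pmf (?T i)) (\<lambda>t. \<Sum>k\<in>UNIV. b k t)"
      by (rule Bochner_Integration.integrable_sum[where f="\<lambda>k t. b k t"], rule integrable_bounded_pmf[where K=1], rule babs)
    show "integrable (measure_pmf (?T i)) (\<lambda>t. 2 * l)" by simp
    show "AE t in measure_pmf (?T i). (\<Sum>k\<in>UNIV. b k t) \<le> 2 * l"
    proof (unfold AE_measure_pmf_iff, intro ballI)
      fix t assume "t \<in> set_pmf (?T i)"
      hence "t \<in> tdom c B C i" using Tsupp by blast
      hence t: "t \<in> {1..C}" by (auto simp: tdom_def)
      have "(\<Sum>k\<in>UNIV. b k t) = l * (\<Sum>k\<in>UNIV. measure_pmf.expectation (p k) (\<lambda>s. real (min (c k s) t)) *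
          (\<Sum>t'\<in>{1..t} \<inter> tdom c B C k. x k t')) / real t"
        by (simp add: b_def yx sum_divide_distrib sum_distrib_left algebra_simps)
      also have "\<dots> \<le> l * (2 * real t) / real t"
        by (intro divide_right_mono mult_left_mono) (use cons t l in auto)
      also have "\<dots> = 2 * l" using t by simp
      finally show "(\<Sum>k\<in>UNIV. b k t) \<le> 2 * l" .
    qed
  qed
  also have "\<dots> = 2 * l" by simp
  finally show ?thesis unfolding Q_def by simp
qed

lemma psi_c_prob:
  fixes v :: "'i::finite \<Rightarrow> nat"
  assumes "v i \<noteq> 0"
  shows "measure_pmf.prob (psi_c chi c B C y v) {w. w i = v i} =
     measure_pmf.prob (chi (xbar c B C y) (Rv v)) {S. i \<in> S} *
     measure_pmf.prob (Pi_pmf (Rv v) 0 (t_dist c B C y))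
        {tt. (\<Sum>i'\<in>{i'\<in>Rv v - {i}. tt i' \<le> tt i}. c i' (v i')) \<le> tt i}"
proof -
  have iR: "i \<in> Rv v" using assms by (simp add: Rv_def)
  have "measure_pmf.prob (psi_c chi c B C y v) {w. w i = v i} =
    measure_pmf.prob (pair_pmf (psi_a chi (xbar c B C y) v) (psi_b c B C y v))
       ({a. a i = v i} \<times> {b. b i = v i})"
    unfolding psi_c_def measure_map_pmf
    by (rule arg_cong[where f="measure_pmf.prob _"]) (auto simp: assms split: if_splits)
  also have "\<dots> = measure_pmf.prob (psi_a chi (xbar c B C y) v) {a. a i = v i} *
                  measure_pmf.prob (psi_b c B C y v) {b. b i = v i}"
    by (rule measure_pmf_prob_product) (rule countableI_type)+
  also have "measure_pmf.prob (psi_a chi (xbar c B C y) v) {a. a i = v i} =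
      measure_pmf.prob (chi (xbar c B C y) (Rv v)) {S. i \<in> S}"
    unfolding psi_a_def measure_map_pmf
    by (rule arg_cong[where f="measure_pmf.prob _"]) (auto simp: assms)
  also have "measure_pmf.prob (psi_b c B C y v) {b. b i = v i} =
      measure_pmf.prob (Pi_pmf (Rv v) 0 (t_dist c B C y))
        {tt. (\<Sum>i'\<in>{i'\<in>Rv v - {i}. tt i' \<le> tt i}. c i' (v i')) \<le> tt i}"
    unfolding psi_b_def measure_map_pmf
    by (rule arg_cong[where f="measure_pmf.prob _"]) (auto simp: assms iR)
  finally show ?thesis .
qed
lemma qb_mono:
  fixes u w :: "'i::finite \<Rightarrow> nat"
  assumes cmono: "\<forall>i. \<forall>s\<in>{1..B}. \<forall>s'\<in>{1..B}. s' \<le> s \<longrightarrow> c i s' \<le> c i s"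
    and uw: "u \<le> w" and wB: "\<And>k. w k \<le> B" and ui: "u i \<noteq> 0"
  shows "measure_pmf.prob (Pi_pmf (Rv w) 0 T) {tt. cnd c w i tt}
      \<le> measure_pmf.prob (Pi_pmf (Rv u) 0 T) {tt. cnd c u i tt}"
proof -
  have sub: "Rv u \<subseteq> Rv w" using uw by (auto simp: Rv_def le_fun_def) (metis gr0I le_zero_eq)
  have iR: "i \<in> Rv u" using ui by (simp add: Rv_def)
  let ?r = "\<lambda>f x. if x \<in> Rv u then f x else 0"
  have "measure_pmf.prob (Pi_pmf (Rv u) 0 T) {tt. cnd c u i tt} =
        measure_pmf.prob (Pi_pmf (Rv w) 0 T) {tt. cnd c u i (?r tt)}"
    by (subst Pi_pmf_subset[OF _ sub]) (auto simp: measure_map_pmf)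
  moreover have "{tt. cnd c w i tt} \<subseteq> {tt. cnd c u i (?r tt)}"
  proof safe
    fix tt assume cw: "cnd c w i tt"
    have set_eq: "{i'\<in>Rv u - {i}. ?r tt i' \<le> ?r tt i} = {i'\<in>Rv u - {i}. tt i' \<le> tt i}"
      using iR by auto
    have "(\<Sum>i'\<in>{i'\<in>Rv u - {i}. tt i' \<le> tt i}. c i' (u i'))
          \<le> (\<Sum>i'\<in>{i'\<in>Rv u - {i}. tt i' \<le> tt i}. c i' (w i'))"
    proof (rule sum_mono)
      fix k assume "k \<in> {i'\<in>Rv u - {i}. tt i' \<le> tt i}"
      hence "u k \<noteq> 0" by (simp add: Rv_def)
      moreover have "u k \<le> w k" using uw by (simp add: le_fun_def)
      ultimately show "c k (u k) \<le> c k (w k)" using cmono wB[of k] by auto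
    qed
    also have "\<dots> \<le> (\<Sum>i'\<in>{i'\<in>Rv w - {i}. tt i' \<le> tt i}. c i' (w i'))"
      by (rule sum_mono2) (use sub in auto)
    also have "\<dots> \<le> tt i" using cw by (simp add: cnd_def)
    finally show "cnd c u i (?r tt)" unfolding cnd_def set_eq using iR by simp
  qed
  ultimately show ?thesis by (simp add: measure_pmf.finite_measure_mono)
qed

lemma prob_bind_pmf:
  "measure_pmf.prob (bind_pmf M N) X = measure_pmf.expectation M (\<lambda>x. measure_pmf.prob (N x) X)"
  by (simp only: prob_as_E, rule E_bind[where K=1]) (simp add: indicator_def)

lemma D_map:
  assumes "set_pmf q \<subseteq> {1..B}" "0 \<le> r" "r \<le> 1"
  shows "map_pmf (\<lambda>n. n \<noteq> 0) (bind_pmf (bernoulli_pmf r) (\<lambda>b. if b then q else return_pmf (0::nat)))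
         = bernoulli_pmf r"
proof -
  have "map_pmf (\<lambda>n. n \<noteq> 0) q = return_pmf True"
    using assms(1) by (subst map_pmf_eq_return_pmf_iff) force
  hence "map_pmf (\<lambda>n. n \<noteq> 0) (bind_pmf (bernoulli_pmf r) (\<lambda>b. if b then q else return_pmf (0::nat)))
     = bind_pmf (bernoulli_pmf r) return_pmf"
    unfolding map_bind_pmf by (intro bind_pmf_cong) auto
  thus ?thesis by (simp add: bind_return_pmf')
qed

lemma D_pmf_zero:
  assumes "r = 0"
  shows "pmf (bind_pmf (bernoulli_pmf r) (\<lambda>b. if b then q else return_pmf (0::nat))) j = (if j = 0 then 1 else 0)"
  using assms by (simp add: pmf_bind)

lemma D_set:
  assumes "set_pmf q \<subseteq> {1..B}"
  shows "set_pmf (bind_pmf (bernoulli_pmf r) (\<lambda>b. if b then q else return_pmf (0::nat))) \<subseteq> {0..B}"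
  using assms by (auto split: if_splits)


lemma crs_part:
  fixes p :: "'i::finite \<Rightarrow> nat pmf" and chi :: "('i \<Rightarrow> real) \<Rightarrow> 'i set \<Rightarrow> 'i set pmf"
    and i :: 'i and l \<gamma> :: real
  assumes psupp: "\<forall>k. set_pmf (p k) \<subseteq> {1..B}"
    and cmono: "\<forall>i. \<forall>s\<in>{1..B}. \<forall>s'\<in>{1..B}. s' \<le> s \<longrightarrow> c i s' \<le> c i s"
    and ynn: "\<forall>k. \<forall>t\<in>tdom c B C k. y k t \<ge> 0"
    and ybnd: "\<forall>k. xbar c B C y k \<le> 1"
    and guar: "measure_pmf.prob (bind_pmf (rand_set (xbar c B C y))
                  (\<lambda>R. map_pmf (\<lambda>S. (R, S)) (chi (xbar c B C y) R))) {(R, S). i \<in> R \<and> i \<in> S}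
               \<ge> \<gamma> * measure_pmf.prob (rand_set (xbar c B C y)) {R. i \<in> R}"
    and mon: "\<forall>i R R'. i \<in> R \<and> R \<subseteq> R' \<longrightarrow>
             measure_pmf.prob (chi (xbar c B C y) R) {S. i \<in> S} \<ge> measure_pmf.prob (chi (xbar c B C y) R') {S. i \<in> S}"
    and cons: "\<forall>t\<in>{1..C}. (\<Sum>k\<in>UNIV. measure_pmf.expectation (p k) (\<lambda>s. real (min (c k s) t)) *
          (\<Sum>t'\<in>{1..t} \<inter> tdom c B C k. x k t')) \<le> 2 * real t"
    and yx: "\<forall>k t. y k t = l * x k t" and l0: "0 \<le> l" and l4: "l \<le> 1/4" and g0: "0 \<le> \<gamma>"
    and j: "j \<in> {1..B}"
  shows "\<gamma> * (1 - 2 * l) * measure_pmf.prob (h_dist p (xbar c B C y)) {v. v i = j}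
     \<le> measure_pmf.prob (bind_pmf (h_dist p (xbar c B C y))
           (\<lambda>v. map_pmf (\<lambda>w. (v, w)) (psi_c chi c B C y v))) {(v, w). v i = j \<and> w i = j}"
proof -
  let ?yb = "xbar c B C y"
  define D where "D k = bind_pmf (bernoulli_pmf (?yb k)) (\<lambda>b. if b then p k else return_pmf 0)" for k
  let ?h = "Pi_pmf UNIV 0 D"
  let ?h' = "Pi_pmf (UNIV - {i}) 0 D"
  let ?T = "t_dist c B C y"
  have hdef: "h_dist p ?yb = ?h" unfolding h_dist_def D_def by (rule refl)
  have ybnn: "0 \<le> ?yb k" for k unfolding xbar_def using ynn by (auto intro: sum_nonneg)
  have j0: "j \<noteq> 0" using j by simp
  define qa where "qa v = measure_pmf.prob (chi ?yb (Rv v)) {S. i \<in> S}" for v :: "'i \<Rightarrow> nat"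
  define qb where "qb v = measure_pmf.prob (Pi_pmf (Rv v) 0 ?T) {tt. cnd c v i tt}" for v :: "'i \<Rightarrow> nat"
  have qa01: "0 \<le> qa v" "qa v \<le> 1" for v by (simp_all add: qa_def)
  have qb01: "0 \<le> qb v" "qb v \<le> 1" for v by (simp_all add: qb_def)
  have pc: "measure_pmf.prob (psi_c chi c B C y v) {w. w i = v i} = qa v * qb v" if "v i \<noteq> 0" for v
    unfolding qa_def qb_def cnd_def by (rule psi_c_prob[where i=i and v=v, OF that])
  have hins: "?h = Pi_pmf (insert i (UNIV - {i})) 0 D" by simp
  have Ehsplit: "measure_pmf.expectation ?h G =
     measure_pmf.expectation (D i) (\<lambda>y0. measure_pmf.expectation ?h' (\<lambda>\<sigma>. G (\<sigma>(i:=y0))))"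
    if "\<And>v. \<bar>G v\<bar> \<le> 1" for G :: "('i \<Rightarrow> nat) \<Rightarrow> real"
  proof -
    have "measure_pmf.expectation (Pi_pmf (insert i (UNIV - {i})) 0 D) G =
     measure_pmf.expectation (D i) (\<lambda>y0. measure_pmf.expectation ?h' (\<lambda>\<sigma>. G (\<sigma>(i:=y0))))"
      by (rule E_Pi_insert[where K=1]) (use that in auto)
    thus ?thesis using hins by metis
  qed
  have compi: "map_pmf (\<lambda>v. v i) ?h = D i" by (simp add: Pi_pmf_component)
  have probi: "measure_pmf.prob ?h {v. P (v i)} = measure_pmf.prob (D i) {y0. P y0}" for P
  proof -
    have "measure_pmf.prob ?h {v. P (v i)} = measure_pmf.prob (map_pmf (\<lambda>v. v i) ?h) {y0. P y0}"
      by (simp add: measure_map_pmf vimage_def)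
    thus ?thesis by (simp add: compi)
  qed
  have LHS: "measure_pmf.prob (bind_pmf ?h (\<lambda>v. map_pmf (\<lambda>w. (v, w)) (psi_c chi c B C y v)))
       {(v, w). v i = j \<and> w i = j}
     = measure_pmf.expectation ?h (\<lambda>v. if v i = j then qa v * qb v else 0)"
    unfolding prob_bind_pmf
  proof (rule Bochner_Integration.integral_cong[OF refl])
    fix v :: "'i \<Rightarrow> nat"
    show "measure_pmf.prob (map_pmf (\<lambda>w. (v, w)) (psi_c chi c B C y v)) {(v, w). v i = j \<and> w i = j}
          = (if v i = j then qa v * qb v else 0)"
    proof (cases "v i = j")
      case True
      have "measure_pmf.prob (map_pmf (\<lambda>w. (v, w)) (psi_c chi c B C y v)) {(v, w). v i = j \<and> w i = j}
          = measure_pmf.prob (psi_c chi c B C y v) {w. w i = v i}"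
        using True by (simp add: measure_map_pmf vimage_def)
      also have "\<dots> = qa v * qb v" using True j0 by (intro pc) simp
      finally show ?thesis using True by simp
    next
      case False
      thus ?thesis by (simp add: measure_map_pmf vimage_def)
    qed
  qed
  define Qa where "Qa \<sigma> = qa (\<sigma>(i:=j))" for \<sigma>
  define Qb where "Qb \<sigma> = qb (\<sigma>(i:=j))" for \<sigma>
  have E1: "measure_pmf.expectation ?h (\<lambda>v. if v i = j then qa v * qb v else 0)
      = pmf (D i) j * measure_pmf.expectation ?h' (\<lambda>\<sigma>. Qa \<sigma> * Qb \<sigma>)"
  proof -
    have "measure_pmf.expectation ?h (\<lambda>v. if v i = j then qa v * qb v else 0)
      = measure_pmf.expectation (D i) (\<lambda>y0. measure_pmf.expectation ?h'
          (\<lambda>\<sigma>. if (\<sigma>(i:=y0)) i = j then qa (\<sigma>(i:=y0)) * qb (\<sigma>(i:=y0)) else 0))"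
      by (rule Ehsplit) (use qa01 qb01 in \<open>auto simp: abs_mult mult_le_one\<close>)
    also have "\<dots> = measure_pmf.expectation (D i) (\<lambda>y0. indicator {j} y0 *
                       measure_pmf.expectation ?h' (\<lambda>\<sigma>. Qa \<sigma> * Qb \<sigma>))"
      by (rule Bochner_Integration.integral_cong[OF refl]) (auto simp: Qa_def Qb_def indicator_def)
    also have "\<dots> = pmf (D i) j * measure_pmf.expectation ?h' (\<lambda>\<sigma>. Qa \<sigma> * Qb \<sigma>)"
      by (simp add: measure_pmf_single)
    finally show ?thesis .
  qed
  have RHS: "measure_pmf.prob ?h {v. v i = j} = pmf (D i) j"
    using probi[of "\<lambda>y0. y0 = j"] by (simp add: measure_pmf_single)
  show ?thesis
  proof (cases "pmf (D i) j = 0")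
    case True
    thus ?thesis unfolding hdef RHS by simp
  next
    case False
    hence pj: "pmf (D i) j > 0" using pmf_nonneg[of "D i" j] by linarith
    have ypos: "?yb i > 0"
    proof (rule ccontr)
      assume "\<not> ?yb i > 0"
      hence "?yb i = 0" using ybnn[of i] by simp
      hence "pmf (D i) j = 0" unfolding D_def using j0 by (subst D_pmf_zero) auto
      thus False using pj by simp
    qed
    have rs: "rand_set ?yb = map_pmf Rv ?h"
    proof -
      have "Pi_pmf UNIV False (\<lambda>k. bernoulli_pmf (?yb k)) = Pi_pmf UNIV False (\<lambda>k. map_pmf (\<lambda>n. n \<noteq> 0) (D k))"
        unfolding D_def using psupp ybnn ybnd by (subst D_map) auto
      also have "\<dots> = map_pmf (\<lambda>h. (\<lambda>n. n \<noteq> 0) \<circ> h) ?h"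
        by (rule Pi_pmf_map) auto
      finally show ?thesis unfolding rand_set_def by (simp add: map_pmf_comp o_def Rv_def[abs_def])
    qed
    have guarL: "measure_pmf.prob (bind_pmf (rand_set ?yb)
                  (\<lambda>R. map_pmf (\<lambda>S. (R, S)) (chi ?yb R))) {(R, S). i \<in> R \<and> i \<in> S}
          = measure_pmf.prob (D i) {y0. y0 \<noteq> 0} * measure_pmf.expectation ?h' Qa"
    proof -
      have "measure_pmf.prob (bind_pmf (rand_set ?yb)
                  (\<lambda>R. map_pmf (\<lambda>S. (R, S)) (chi ?yb R))) {(R, S). i \<in> R \<and> i \<in> S}
          = measure_pmf.expectation ?h (\<lambda>v. if v i \<noteq> 0 then qa v else 0)"
        unfolding rs prob_bind_pmf integral_map_pmf
        by (rule Bochner_Integration.integral_cong[OF refl])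
           (auto simp: measure_map_pmf vimage_def qa_def Rv_def)
      also have "\<dots> = measure_pmf.expectation (D i) (\<lambda>y0. measure_pmf.expectation ?h'
          (\<lambda>\<sigma>. if (\<sigma>(i:=y0)) i \<noteq> 0 then qa (\<sigma>(i:=y0)) else 0))"
        by (rule Ehsplit) (use qa01 in auto)
      also have "\<dots> = measure_pmf.expectation (D i) (\<lambda>y0. indicator {y0. y0 \<noteq> 0} y0 *
                       measure_pmf.expectation ?h' Qa)"
      proof (rule Bochner_Integration.integral_cong[OF refl])
        fix y0 :: nat
        show "measure_pmf.expectation ?h' (\<lambda>\<sigma>. if (\<sigma>(i:=y0)) i \<noteq> 0 then qa (\<sigma>(i:=y0)) else 0)
              = indicator {y0. y0 \<noteq> 0} y0 * measure_pmf.expectation ?h' Qa"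
        proof (cases "y0 = 0")
          case True thus ?thesis by simp
        next
          case False
          have "Rv (\<sigma>(i:=y0)) = Rv (\<sigma>(i:=j))" for \<sigma> :: "'i \<Rightarrow> nat"
            using False j0 by (auto simp: Rv_def)
          hence "qa (\<sigma>(i:=y0)) = Qa \<sigma>" for \<sigma> by (simp add: qa_def Qa_def)
          thus ?thesis using False by simp
        qed
      qed
      also have "\<dots> = measure_pmf.prob (D i) {y0. y0 \<noteq> 0} * measure_pmf.expectation ?h' Qa"
        by simp
      finally show ?thesis .
    qed
    have guarR: "measure_pmf.prob (rand_set ?yb) {R. i \<in> R} = measure_pmf.prob (D i) {y0. y0 \<noteq> 0}"
      unfolding rs using probi[of "\<lambda>y0. y0 \<noteq> 0"] by (simp add: measure_map_pmf vimage_def Rv_def)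
    have Ppos: "measure_pmf.prob (D i) {y0. y0 \<noteq> 0} > 0"
    proof -
      have "pmf (D i) j = measure_pmf.prob (D i) {j}" by (simp add: measure_pmf_single)
      also have "\<dots> \<le> measure_pmf.prob (D i) {y0. y0 \<noteq> 0}"
        by (rule measure_pmf.finite_measure_mono) (use j0 in auto)
      finally show ?thesis using pj by simp
    qed
    have EQa: "\<gamma> \<le> measure_pmf.expectation ?h' Qa"
    proof -
      have "\<gamma> * measure_pmf.prob (D i) {y0. y0 \<noteq> 0} \<le> measure_pmf.expectation ?h' Qa * measure_pmf.prob (D i) {y0. y0 \<noteq> 0}"
        using guar guarL guarR by (simp add: mult.commute)
      thus ?thesis using Ppos by simp
    qed
    have qb_full: "qb v = measure_pmf.prob (Pi_pmf UNIV 0 ?T) {tt. cnd c v i tt}" if "v i \<noteq> 0" for v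
    proof -
      have iR: "i \<in> Rv v" using that by (simp add: Rv_def)
      have "qb v = measure_pmf.prob (Pi_pmf UNIV 0 ?T) {tt. cnd c v i (\<lambda>x. if x \<in> Rv v then tt x else 0)}"
        unfolding qb_def by (subst Pi_pmf_subset[of UNIV "Rv v"]) (auto simp: measure_map_pmf vimage_def)
      also have "{tt. cnd c v i (\<lambda>x. if x \<in> Rv v then tt x else 0)} = {tt. cnd c v i tt}"
      proof -
        have "{i'\<in>Rv v - {i}. (if i' \<in> Rv v then tt i' else 0) \<le> (if i \<in> Rv v then tt i else 0)} =
              {i'\<in>Rv v - {i}. tt i' \<le> tt i}" for tt :: "'i \<Rightarrow> nat" using iR by auto
        thus ?thesis using iR by (auto simp: cnd_def)
      qed
      finally show ?thesis .
    qed
    have EQb: "1 - 2 * l \<le> measure_pmf.expectation ?h' Qb"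
    proof -
      have "1 - 2 * l \<le> measure_pmf.expectation ?h'
           (\<lambda>\<sigma>. measure_pmf.prob (Pi_pmf UNIV 0 ?T) {tt. cnd c (\<sigma>(i:=j)) i tt})"
        by (rule markov_main[OF psupp ynn ybnd _ ypos cons yx l0]) (simp add: D_def fun_eq_iff)
      also have "\<dots> = measure_pmf.expectation ?h' Qb"
      proof (rule Bochner_Integration.integral_cong[OF refl])
        fix \<sigma> :: "'i \<Rightarrow> nat"
        show "measure_pmf.prob (Pi_pmf UNIV 0 ?T) {tt. cnd c (\<sigma>(i:=j)) i tt} = Qb \<sigma>"
          unfolding Qb_def by (rule qb_full[symmetric]) (use j0 in simp)
      qed
      finally show ?thesis .
    qed
    define tr where "tr \<sigma> = (\<lambda>k. min (\<sigma> k) B)" for \<sigma> :: "'i \<Rightarrow> nat"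
    define Qb' where "Qb' \<sigma> = qb ((tr \<sigma>)(i:=j))" for \<sigma>
    have AEtr: "AE \<sigma> in measure_pmf ?h'. Qb' \<sigma> = Qb \<sigma>"
    proof (unfold AE_measure_pmf_iff, intro ballI)
      fix \<sigma> assume s: "\<sigma> \<in> set_pmf ?h'"
      have "\<sigma> k \<le> B" for k
      proof (cases "k = i")
        case True thus ?thesis using s by (auto simp: set_Pi_pmf PiE_dflt_def)
      next
        case False
        hence "\<sigma> k \<in> set_pmf (D k)" using s by (auto simp: set_Pi_pmf PiE_dflt_def)
        thus ?thesis using D_set[of "p k" B "?yb k"] psupp unfolding D_def by auto
      qed
      hence "tr \<sigma> = \<sigma>" by (auto simp: tr_def fun_eq_iff)
      thus "Qb' \<sigma> = Qb \<sigma>" by (simp add: Qb'_def Qb_def)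
    qed
    have Qa_abs: "\<bar>Qa \<sigma>\<bar> \<le> 1" for \<sigma> using qa01 by (simp add: Qa_def)
    have Qb_abs: "\<bar>Qb \<sigma>\<bar> \<le> 1" for \<sigma> using qb01 by (simp add: Qb_def)
    have Qb'_abs: "\<bar>Qb' \<sigma>\<bar> \<le> 1" for \<sigma> using qb01 by (simp add: Qb'_def)
    have Qa_mono: "Qa \<tau> \<le> Qa \<sigma>" if "\<sigma> \<le> \<tau>" for \<sigma> \<tau> :: "'i \<Rightarrow> nat"
    proof -
      have "i \<in> Rv (\<sigma>(i:=j))" using j0 by (simp add: Rv_def)
      moreover have "Rv (\<sigma>(i:=j)) \<subseteq> Rv (\<tau>(i:=j))"
      proof
        fix k assume "k \<in> Rv (\<sigma>(i:=j))"
        moreover have "\<sigma> k \<le> \<tau> k" using that by (simp add: le_fun_def)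
        ultimately show "k \<in> Rv (\<tau>(i:=j))" by (auto simp: Rv_def)
      qed
      ultimately show ?thesis using mon unfolding Qa_def qa_def by blast
    qed
    have Qb'_mono: "Qb' \<tau> \<le> Qb' \<sigma>" if "\<sigma> \<le> \<tau>" for \<sigma> \<tau> :: "'i \<Rightarrow> nat"
      unfolding Qb'_def qb_def
    proof (rule qb_mono[OF cmono])
      show "(tr \<sigma>)(i := j) \<le> (tr \<tau>)(i := j)"
      proof (rule le_funI)
        fix k have "\<sigma> k \<le> \<tau> k" using that by (simp add: le_fun_def)
        thus "((tr \<sigma>)(i := j)) k \<le> ((tr \<tau>)(i := j)) k" by (auto simp: tr_def)
      qed
      show "((tr \<tau>)(i := j)) k \<le> B" for k using j by (auto simp: tr_def)
      show "((tr \<sigma>)(i := j)) i \<noteq> 0" using j0 by simp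
    qed
    have "measure_pmf.expectation ?h' Qa * measure_pmf.expectation ?h' Qb' \<le>
          measure_pmf.expectation ?h' (\<lambda>\<sigma>. Qa \<sigma> * Qb' \<sigma>)"
      by (rule harris) (use Qa_abs Qb'_abs Qa_mono Qb'_mono in auto)
    moreover have "measure_pmf.expectation ?h' Qb' = measure_pmf.expectation ?h' Qb"
      by (rule integral_cong_AE) (use AEtr in auto)
    moreover have "measure_pmf.expectation ?h' (\<lambda>\<sigma>. Qa \<sigma> * Qb' \<sigma>) = measure_pmf.expectation ?h' (\<lambda>\<sigma>. Qa \<sigma> * Qb \<sigma>)"
      by (rule integral_cong_AE) (use AEtr in auto)
    ultimately have H: "measure_pmf.expectation ?h' Qa * measure_pmf.expectation ?h' Qb \<le>
          measure_pmf.expectation ?h' (\<lambda>\<sigma>. Qa \<sigma> * Qb \<sigma>)" by simp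
    have "\<gamma> * (1 - 2 * l) \<le> measure_pmf.expectation ?h' Qa * measure_pmf.expectation ?h' Qb"
      by (rule mult_mono[OF EQa EQb]) (use g0 l4 EQa in auto)
    also note H
    finally have "\<gamma> * (1 - 2 * l) \<le> measure_pmf.expectation ?h' (\<lambda>\<sigma>. Qa \<sigma> * Qb \<sigma>)" .
    hence "pmf (D i) j * (\<gamma> * (1 - 2 * l)) \<le> pmf (D i) j * measure_pmf.expectation ?h' (\<lambda>\<sigma>. Qa \<sigma> * Qb \<sigma>)"
      by (rule mult_left_mono) simp
    thus ?thesis unfolding hdef RHS LHS E1 by (simp add: mult.commute)
  qed
qed


lemma scaled_mem:
  fixes F :: "'i::finite set set" and \<beta> l :: real and xb :: "'i \<Rightarrow> real"
  assumes dc: "downward_closed F" and P: "xb \<in> polytope F"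
    and l0: "0 \<le> l" and lb: "l \<le> \<beta>"
  shows "(\<lambda>k. l * xb k) \<in> scaled_polytope \<beta> F"
proof (cases "\<beta> = 0")
  case True
  hence "l = 0" using l0 lb by simp
  thus ?thesis unfolding scaled_polytope_def using P True by auto
next
  case False
  hence bpos: "\<beta> > 0" using l0 lb by simp
  obtain lam where lam: "\<forall>S\<in>F. lam S \<ge> 0" "(\<Sum>S\<in>F. lam S) = 1"
      "\<forall>i. xb i = (\<Sum>S\<in>F. lam S * indicator S i)"
    using P unfolding polytope_def by blast
  have "F \<noteq> {}" using lam(2) by auto
  then obtain S0 where "S0 \<in> F" by blast
  hence e: "{} \<in> F" using dc unfolding downward_closed_def by blast
  define r where "r = l / \<beta>"
  have r01: "0 \<le> r" "r \<le> 1" using l0 lb bpos by (auto simp: r_def)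
  define lam' where "lam' S = r * lam S + (if S = {} then 1 - r else 0)" for S
  have fin: "finite F" by simp
  have "(\<lambda>k. r * xb k) \<in> polytope F"
    unfolding polytope_def
  proof (intro CollectI exI[of _ lam'] conjI allI ballI)
    fix S assume "S \<in> F" thus "0 \<le> lam' S" using lam(1) r01 by (auto simp: lam'_def)
  next
    have "(\<Sum>S\<in>F. lam' S) = r * (\<Sum>S\<in>F. lam S) + (\<Sum>S\<in>F. if S = {} then 1 - r else 0)"
      by (simp add: lam'_def sum.distrib sum_distrib_left)
    also have "(\<Sum>S\<in>F. if S = {} then 1 - r else 0) = 1 - r"
      using e fin by (simp add: sum.delta)
    finally show "(\<Sum>S\<in>F. lam' S) = 1" using lam(2) by simp
  next
    fix i
    have "(\<Sum>S\<in>F. lam' S * indicator S i) = r * (\<Sum>S\<in>F. lam S * indicator S i) +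
            (\<Sum>S\<in>F. (if S = {} then 1 - r else 0) * indicator S i)"
      by (simp only: lam'_def distrib_right sum.distrib sum_distrib_left mult.assoc)
    also have "(\<Sum>S\<in>F. (if S = {} then 1 - r else 0) * indicator S i) = 0"
      by (rule sum.neutral) auto
    finally show "r * xb i = (\<Sum>S\<in>F. lam' S * indicator S i)" using lam(3) by simp
  qed
  moreover have "\<forall>k. l * xb k = \<beta> * (r * xb k)" using bpos by (simp add: r_def)
  ultimately show ?thesis unfolding scaled_polytope_def
    by (intro CollectI bexI[of _ "\<lambda>k. r * xb k"]) auto
qed

theorem lemma5:
  fixes p :: "'i::finite \<Rightarrow> nat pmf"
    and c :: "'i \<Rightarrow> nat \<Rightarrow> nat"
    and B C :: nat
    and F :: "'i set set"
    and \<beta> \<gamma> :: real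
    and chi :: "('i \<Rightarrow> real) \<Rightarrow> 'i set \<Rightarrow> 'i set pmf"
    and y :: "'i \<Rightarrow> nat \<Rightarrow> real"
  assumes "B \<ge> 1" and "C \<ge> 1"
    and "\<forall>i. set_pmf (p i) \<subseteq> {1..B}"
    and "\<forall>i. \<forall>s\<in>{1..B}. \<forall>s'\<in>{1..B}. s' \<le> s \<longrightarrow> c i s' \<le> c i s"
    and "downward_closed F"
    and "0 \<le> \<beta>" "\<beta> \<le> 1" "0 \<le> \<gamma>" "\<gamma> \<le> 1"
    and "balanced_CRS F \<beta> \<gamma> chi"
    and "\<exists>x. P1_feasible p c B C F x \<and> (\<forall>i t. y i t = min \<beta> (1/4) * x i t)"
  shows "is_CRS B (h_dist p (xbar c B C y)) (psi_c chi c B C y) ((1 - min (2 * \<beta>) (1/2)) * \<gamma>)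
       \<and> monotone_CRS B (psi_c chi c B C y)"
proof -
  note psupp = assms(3) and cmono = assms(4) and dc = assms(5)
  obtain x where feas: "P1_feasible p c B C F x" and yx0: "\<forall>i t. y i t = min \<beta> (1/4) * x i t"
    using assms(11) by blast
  define l where "l = min \<beta> (1/4)"
  have yx: "\<forall>k t. y k t = l * x k t" using yx0 by (simp add: l_def)
  have l0: "0 \<le> l" and l4: "l \<le> 1/4" and lb: "l \<le> \<beta>" using assms(6) by (auto simp: l_def)
  have xnn: "\<forall>k. \<forall>t\<in>tdom c B C k. x k t \<ge> 0" and xb1: "\<forall>k. xbar c B C x k \<le> 1"
    and xP: "xbar c B C x \<in> polytope F"
    and cons: "\<forall>t\<in>{1..C}. (\<Sum>k\<in>UNIV. measure_pmf.expectation (p k) (\<lambda>s. real (min (c k s) t)) *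
          (\<Sum>t'\<in>{1..t} \<inter> tdom c B C k. x k t')) \<le> 2 * real t"
    using feas unfolding P1_feasible_def by auto
  have ynn: "\<forall>k. \<forall>t\<in>tdom c B C k. y k t \<ge> 0" using xnn yx l0 by simp
  have yb_eq: "xbar c B C y = (\<lambda>k. l * xbar c B C x k)"
    by (simp add: fun_eq_iff xbar_def yx sum_distrib_left)
  have xbnn: "0 \<le> xbar c B C x k" for k unfolding xbar_def using xnn by (auto intro: sum_nonneg)
  have ybnd: "\<forall>k. xbar c B C y k \<le> 1"
  proof
    fix k
    have "l * xbar c B C x k \<le> 1 * 1" by (rule mult_mono) (use l4 xb1 xbnn in auto)
    thus "xbar c B C y k \<le> 1" by (simp add: yb_eq)
  qed
  have zmem: "xbar c B C y \<in> scaled_polytope \<beta> F"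
    unfolding yb_eq by (rule scaled_mem[OF dc xP l0 lb])
  have bal: "(\<forall>i. measure_pmf.prob (bind_pmf (rand_set (xbar c B C y))
                 (\<lambda>R. map_pmf (\<lambda>S. (R, S)) (chi (xbar c B C y) R))) {(R, S). i \<in> R \<and> i \<in> S}
             \<ge> \<gamma> * measure_pmf.prob (rand_set (xbar c B C y)) {R. i \<in> R}) \<and>
        (\<forall>i R R'. i \<in> R \<and> R \<subseteq> R' \<longrightarrow>
             measure_pmf.prob (chi (xbar c B C y) R) {S. i \<in> S} \<ge> measure_pmf.prob (chi (xbar c B C y) R') {S. i \<in> S})"
    using assms(10) zmem unfolding balanced_CRS_def by blast
  hence guar: "\<And>i. measure_pmf.prob (bind_pmf (rand_set (xbar c B C y))
                 (\<lambda>R. map_pmf (\<lambda>S. (R, S)) (chi (xbar c B C y) R))) {(R, S). i \<in> R \<and> i \<in> S}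
             \<ge> \<gamma> * measure_pmf.prob (rand_set (xbar c B C y)) {R. i \<in> R}"
    and mon: "\<forall>i R R'. i \<in> R \<and> R \<subseteq> R' \<longrightarrow>
             measure_pmf.prob (chi (xbar c B C y) R) {S. i \<in> S} \<ge> measure_pmf.prob (chi (xbar c B C y) R') {S. i \<in> S}"
    by blast+
  have alpha: "(1 - min (2 * \<beta>) (1/2)) * \<gamma> = \<gamma> * (1 - 2 * l)"
    by (simp add: l_def min_def)
  have part1: "is_CRS B (h_dist p (xbar c B C y)) (psi_c chi c B C y) ((1 - min (2 * \<beta>) (1/2)) * \<gamma>)"
    unfolding is_CRS_def alpha
  proof (intro conjI ballI allI)
    fix v :: "'i \<Rightarrow> nat" and w i
    assume "w \<in> set_pmf (psi_c chi c B C y v)"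
    thus "w i = 0 \<or> w i = v i" by (auto simp: psi_c_def)
  next
    fix i :: 'i and j assume j: "j \<in> {1..B}"
    show "\<gamma> * (1 - 2 * l) * measure_pmf.prob (h_dist p (xbar c B C y)) {v. v i = j}
      \<le> measure_pmf.prob (bind_pmf (h_dist p (xbar c B C y))
           (\<lambda>v. map_pmf (\<lambda>w. (v, w)) (psi_c chi c B C y v))) {(v, w). v i = j \<and> w i = j}"
      by (rule crs_part[where p=p and c=c and B=B and C=C and y=y and chi=chi and i=i and x=x and l=l and \<gamma>=\<gamma> and j=j, OF psupp cmono ynn ybnd guar[of i] mon cons yx l0 l4 assms(8) j])
  qed
  have part2: "monotone_CRS B (psi_c chi c B C y)"
    unfolding monotone_CRS_def
  proof (intro ballI allI impI)
    fix u w :: "'i \<Rightarrow> nat" and i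
    assume u: "u \<in> states0 B" and w: "w \<in> states0 B" and uw: "u i = w i \<and> u \<le> w"
    show "measure_pmf.prob (psi_c chi c B C y w) {x. x i = w i}
          \<le> measure_pmf.prob (psi_c chi c B C y u) {x. x i = u i}"
    proof (cases "u i = 0")
      case True
      have "measure_pmf.prob (psi_c chi c B C y u) {x. x i = u i} = 1"
        by (subst measure_pmf.prob_eq_1) (auto simp: AE_measure_pmf_iff psi_c_def True)
      thus ?thesis by simp
    next
      case False
      have wi: "w i \<noteq> 0" using False uw by simp
      have "measure_pmf.prob (chi (xbar c B C y) (Rv w)) {S. i \<in> S}
            \<le> measure_pmf.prob (chi (xbar c B C y) (Rv u)) {S. i \<in> S}"
      proof -
        have "i \<in> Rv u" using False by (simp add: Rv_def)
        moreover have "Rv u \<subseteq> Rv w"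
        proof
          fix k assume "k \<in> Rv u"
          moreover have "u k \<le> w k" using uw by (simp add: le_fun_def)
          ultimately show "k \<in> Rv w" by (auto simp: Rv_def)
        qed
        ultimately show ?thesis using mon by blast
      qed
      moreover have "measure_pmf.prob (Pi_pmf (Rv w) 0 (t_dist c B C y)) {tt. cnd c w i tt}
            \<le> measure_pmf.prob (Pi_pmf (Rv u) 0 (t_dist c B C y)) {tt. cnd c u i tt}"
        by (rule qb_mono[OF cmono]) (use uw w False in \<open>auto simp: states0_def\<close>)
      ultimately have "measure_pmf.prob (chi (xbar c B C y) (Rv w)) {S. i \<in> S} *
             measure_pmf.prob (Pi_pmf (Rv w) 0 (t_dist c B C y)) {tt. cnd c w i tt}
          \<le> measure_pmf.prob (chi (xbar c B C y) (Rv u)) {S. i \<in> S} *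
             measure_pmf.prob (Pi_pmf (Rv u) 0 (t_dist c B C y)) {tt. cnd c u i tt}"
        by (intro mult_mono) auto
      thus ?thesis
        unfolding psi_c_prob[where v=u and i=i, OF False] psi_c_prob[where v=w and i=i, OF wi]
        by (simp add: cnd_def)
    qed
  qed
  show ?thesis using part1 part2 by blast
qed

end
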